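(* Let $\alpha,\mu>0$ with $\varrho=\alpha/\mu<1$, and for $m\in\mathbb{N}$ let $\mathbf{E}_m$ be the stationary distribution on $\mathbb{N}$ of the single-server Processor-Sharing queue with $m$ permanent customers, Poisson arrivals of rate $\alpha$ and exponential service requirements of rate $\mu$ (described in the context). Then for all fixed $x>0$, $y>0$, \[ \lim_{A\to\infty}\frac1A\log\mathbf{E}_{[Ay]}([Ax])=-K(x,y),\qquad K(x,y)=x\log\Big(\frac{x}{\varrho}\Big)+y\log y-(x+y)\log(x+y)-y\log(1-\varrho). \]
   Context: The single-server PS queue with $m$ permanent customers is the birth-and-death process on $\mathbb{N}$ (number $n$ of non-permanent customers) with transitions $n\to n+1$ at rate $\alpha$ and $n\to n-1$ at rate $\mu n/(n+m)$ (the $n+m$ customers share unit capacity equally; permanent customers never leave). $[z]$ denotes the integer part of $z$. *)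

theory Defs
  imports "HOL-Analysis.Analysis"
begin

text \<open>Transition rates of the PS queue with m permanent customers, on states n (number of
  non-permanent customers): n -> n+1 at rate alpha, n -> n-1 at rate mu*n/(n+m).\<close>

definition ps_birth :: "real \<Rightarrow> nat \<Rightarrow> real" where
  "ps_birth \<alpha> n = \<alpha>"

definition ps_death :: "real \<Rightarrow> nat \<Rightarrow> nat \<Rightarrow> real" where
  "ps_death \<mu> m n = (if n = 0 then 0 else \<mu> * real n / real (n + m))"

definition ps_stationary :: "real \<Rightarrow> real \<Rightarrow> nat \<Rightarrow> (nat \<Rightarrow> real) \<Rightarrow> bool" where
  "ps_stationary \<alpha> \<mu> m \<pi> \<longleftrightarrow>
     (\<forall>n. 0 \<le> \<pi> n) \<and> \<pi> sums 1 \<and>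
     (\<forall>n. \<pi> n * (ps_birth \<alpha> n + ps_death \<mu> m n) =
          (if n = 0 then 0 else \<pi> (n - 1) * ps_birth \<alpha> (n - 1))
          + \<pi> (n + 1) * ps_death \<mu> m (n + 1))"

definition K_rate :: "real \<Rightarrow> real \<Rightarrow> real \<Rightarrow> real" where
  "K_rate \<rho> x y = x * ln (x / \<rho>) + y * ln y - (x + y) * ln (x + y) - y * ln (1 - \<rho>)"

end

theory Submission imports Defs "HOL-Real_Asymp.Real_Asymp" begin

lemma binom_series:
  fixes r :: real assumes "0 \<le> r" "r < 1"
  shows "(\<lambda>n. real ((n + m) choose n) * r ^ n) sums (1 / (1 - r) ^ (m + 1))"
proof -
  have "(\<lambda>n. ((- real (m+1)) gchoose n) * (-r)^n) sums (1 + (-r)) powr (- real (m+1))"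
    by (rule gen_binomial_real) (use assms in auto)
  moreover have "((- real (m+1)) gchoose n) * (-r)^n = real ((n + m) choose n) * r ^ n" for n
  proof -
    have "((- real (m+1)) gchoose n) = (-1)^n * ((real (m+1) + real n - 1) gchoose n)"
      by (rule gbinomial_minus)
    also have "real (m+1) + real n - 1 = real (n+m)" by simp
    finally have G: "((- real (m+1)) gchoose n) = (-1)^n * real ((n + m) choose n)"
      by (simp only: binomial_gbinomial)
    have P: "(-r)^n = (-1)^n * r^n" by (rule power_minus)
    have Q: "(-1::real)^n * (-1)^n = 1"
      by (metis power_mult_distrib mult_minus1 minus_minus power_one)
    have "((- real (m+1)) gchoose n) * (-r)^n = ((-1::real)^n * (-1)^n) * (real ((n + m) choose n) * r ^ n)"
      unfolding G P by (simp only: mult_ac)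
    then show ?thesis unfolding Q by (simp only: mult_1)
  qed
  moreover have "(1 + (-r)) powr (- real (m+1)) = 1 / (1 - r) ^ (m + 1)"
  proof -
    have a: "1 + (-r) = 1 - r" by simp
    have b: "(1 - r) powr (- real (m+1)) = 1 / (1 - r) powr real (m+1)" by (rule powr_minus_divide)
    have c: "(1 - r) powr real (m+1) = (1 - r) ^ (m+1)" by (rule powr_realpow) (use assms in simp)
    show ?thesis unfolding a b c ..
  qed
  ultimately show ?thesis by simp
qed

lemma lnfact_lower: "n \<ge> 1 \<Longrightarrow> real n * ln n - n + 1 \<le> ln (fact n)"
proof (induction n rule: nat_induct_at_least)
  case base then show ?case by simp
next
  case (Suc n)
  have "ln (1 + 1 / real n) \<le> 1 / real n" by (rule ln_add_one_self_le_self) simp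
  moreover have "ln (1 + 1 / real n) = ln (n+1) - ln n" proof -
    have "1 + 1 / real n = (real n + 1) / real n" using Suc by (simp add: field_simps)
    thus ?thesis using Suc ln_div[of "real n + 1" "real n"] by simp
  qed
  ultimately have "ln (n+1) - ln n \<le> 1 / real n" by simp
  hence "real n * (ln (n+1) - ln n) \<le> real n * (1 / real n)"
    by (rule mult_left_mono) simp
  hence "real n * (ln (n+1) - ln n) \<le> 1" using Suc by simp
  moreover have "ln (fact (Suc n)) = ln (n+1) + ln (fact n)"
    by (simp add: ln_mult add.commute)
  ultimately show ?case using Suc by (simp add: algebra_simps)
qed

lemma lnfact_upper: "ln (fact n) \<le> (real n + 1) * ln (n + 1) - n"
proof (induction n)
  case 0 then show ?case by simp
next
  case (Suc n)
  have "ln ((real n + 1) / (real n + 2)) \<le> (real n + 1) / (real n + 2) - 1"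
    by (rule ln_le_minus_one) simp
  moreover have "ln ((real n + 1) / (real n + 2)) = ln (real n + 1) - ln (real n + 2)"
    using ln_div[of "real n + 1" "real n + 2"] by simp
  moreover have "(real n + 1) / (real n + 2) - 1 = - 1 / (real n + 2)" by (simp add: field_simps)
  ultimately have "1 / (real n + 2) \<le> ln (real n + 2) - ln (real n + 1)" by simp
  hence "1 \<le> (real n + 2) * (ln (real n + 2) - ln (real n + 1))"
    by (simp add: field_simps)
  moreover have "ln (fact (Suc n)) = ln (n+1) + ln (fact n)"
    by (simp add: ln_mult add.commute)
  ultimately show ?case using Suc by (simp add: algebra_simps add.commute)
qed


lemma lnfact_err:
  "0 \<le> ln (fact k) - (real k * ln k - k) \<and> ln (fact k) - (real k * ln k - k) \<le> 1 + ln (real k + 1)"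
proof (cases "k = 0")
  case True then show ?thesis by simp
next
  case False
  hence k1: "k \<ge> 1" by simp
  have lo: "real k * ln k - k + 1 \<le> ln (fact k)" using lnfact_lower[OF k1] .
  have up: "ln (fact k) \<le> (real k + 1) * ln (real k + 1) - k" using lnfact_upper .
  have "ln (1 + 1 / real k) \<le> 1 / real k" by (rule ln_add_one_self_le_self) simp
  moreover have "ln (1 + 1 / real k) = ln (real k + 1) - ln k"
  proof -
    have "1 + 1 / real k = (real k + 1) / real k" using k1 by (simp add: field_simps)
    thus ?thesis using k1 ln_div[of "real k + 1" "real k"] by simp
  qed
  ultimately have "ln (real k + 1) - ln k \<le> 1 / real k" by simp
  hence "real k * (ln (real k + 1) - ln k) \<le> real k * (1 / real k)"
    by (rule mult_left_mono) simp
  hence "real k * (ln (real k + 1) - ln k) \<le> 1" using k1 by simp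
  then show ?thesis using lo up by (simp add: algebra_simps)
qed

lemma stat_formula:
  fixes \<alpha> \<mu> :: real
  assumes a: "\<alpha> > 0" and mu: "\<mu> > 0" and r: "\<alpha> / \<mu> < 1" and st: "ps_stationary \<alpha> \<mu> m \<pi>"
  shows "\<pi> n = (1 - \<alpha>/\<mu>) ^ (m+1) * (\<alpha>/\<mu>) ^ n * real ((n + m) choose n)"
proof -
  define \<rho> where "\<rho> = \<alpha> / \<mu>"
  have bal: "\<And>n. \<pi> n * (ps_birth \<alpha> n + ps_death \<mu> m n) =
          (if n = 0 then 0 else \<pi> (n - 1) * ps_birth \<alpha> (n - 1))
          + \<pi> (n + 1) * ps_death \<mu> m (n + 1)"
    and sm: "\<pi> sums 1" using st unfolding ps_stationary_def by auto
  have db: "\<pi> n * \<alpha> = \<pi> (Suc n) * (\<mu> * real (Suc n) / real (Suc n + m))" for n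
  proof (induction n)
    case 0
    then show ?case using bal[of 0] by (simp add: ps_birth_def ps_death_def)
  next
    case (Suc n)
    have "\<pi> (Suc n) * (\<alpha> + \<mu> * real (Suc n) / real (Suc n + m)) =
       \<pi> n * \<alpha> + \<pi> (Suc (Suc n)) * (\<mu> * real (Suc (Suc n)) / real (Suc (Suc n) + m))"
      using bal[of "Suc n"] by (simp add: ps_birth_def ps_death_def)
    then show ?case using Suc by (simp add: algebra_simps)
  qed
  have form: "\<pi> n = \<pi> 0 * \<rho> ^ n * real ((n + m) choose n)" for n
  proof (induction n)
    case 0 then show ?case by simp
  next
    case (Suc n)
    have b: "real (Suc n) * real ((Suc n + m) choose Suc n) = real (Suc (n + m)) * real ((n+m) choose n)"
      using Suc_times_binomial[of n "n+m"] by (metis add_Suc of_nat_mult)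
    have "\<pi> (Suc n) = \<pi> n * \<alpha> * real (Suc n + m) / (\<mu> * real (Suc n))"
    proof -
      have pos: "real (Suc n + m) > 0" "\<mu> * real (Suc n) > 0" using mu by auto
      have "\<pi> n * \<alpha> * real (Suc n + m) = \<pi> (Suc n) * (\<mu> * real (Suc n))"
        using db[of n] pos(1) by (simp add: divide_simps)
      thus ?thesis using pos(2) by (simp add: field_simps)
    qed
    also have "\<dots> = \<pi> n * \<rho> * (real (Suc n + m) / real (Suc n))"
      using mu by (simp add: \<rho>_def)
    also have "\<dots> = \<pi> 0 * \<rho> ^ n * real ((n + m) choose n) * \<rho> * (real (Suc n + m) / real (Suc n))"
      by (subst Suc.IH) (rule refl)
    also have "\<dots> = \<pi> 0 * \<rho> ^ n * \<rho> * (real (Suc n + m) * real ((n + m) choose n) / real (Suc n))"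
      by simp
    also have "real (Suc n + m) * real ((n + m) choose n) / real (Suc n) = real ((Suc n + m) choose Suc n)"
    proof -
      have nz: "real (Suc n) \<noteq> 0" by simp
      have "real ((Suc n + m) choose Suc n) = (real (Suc n) * real ((Suc n + m) choose Suc n)) / real (Suc n)"
        using nz by simp
      also have "\<dots> = real (Suc (n + m)) * real ((n+m) choose n) / real (Suc n)"
        by (simp only: b)
      also have "real (Suc (n + m)) = real (Suc n + m)" by (simp only: add_Suc)
      finally show ?thesis by (simp only:)
    qed
    finally show ?case by simp
  qed
  have r0: "0 \<le> \<rho>" "\<rho> < 1" using a mu r by (auto simp: \<rho>_def)
  have "(\<lambda>n. \<pi> 0 * (real ((n + m) choose n) * \<rho> ^ n)) sums (\<pi> 0 * (1 / (1 - \<rho>) ^ (m + 1)))"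
    by (rule sums_mult[OF binom_series[OF r0]])
  moreover have "(\<lambda>n. \<pi> 0 * (real ((n + m) choose n) * \<rho> ^ n)) = \<pi>"
  proof
    fix k show "\<pi> 0 * (real ((k + m) choose k) * \<rho> ^ k) = \<pi> k"
      using form[of k] by (simp add: mult_ac)
  qed
  ultimately have "\<pi> 0 * (1 / (1 - \<rho>) ^ (m + 1)) = 1" using sm sums_unique2 by metis
  hence "\<pi> 0 = (1 - \<rho>) ^ (m+1)" using r0 by (simp add: field_simps)
  thus ?thesis using form[of n] by (simp add: \<rho>_def)
qed

lemma floor_lim:
  fixes c :: real assumes c: "c > 0"
  shows "((\<lambda>A. real (nat \<lfloor>A * c\<rfloor>) / A) \<longlongrightarrow> c) at_top"
proof (rule tendsto_sandwich[where f = "\<lambda>A. (A * c - 1) / A" and h = "\<lambda>A. c"])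
  show "\<forall>\<^sub>F A in at_top. (A * c - 1) / A \<le> real (nat \<lfloor>A * c\<rfloor>) / A"
    using eventually_gt_at_top[of 0]
  proof eventually_elim
    case (elim A)
    have "A * c - 1 \<le> real (nat \<lfloor>A * c\<rfloor>)" by linarith
    thus ?case using elim by (simp add: divide_right_mono)
  qed
  show "\<forall>\<^sub>F A in at_top. real (nat \<lfloor>A * c\<rfloor>) / A \<le> c"
    using eventually_gt_at_top[of 0]
  proof eventually_elim
    case (elim A)
    have "real (nat \<lfloor>A * c\<rfloor>) \<le> A * c" using elim c by (simp add: of_nat_nat)
    thus ?case using elim by (simp add: field_simps)
  qed
  show "((\<lambda>A. (A * c - 1) / A) \<longlongrightarrow> c) at_top" by real_asymp
qed simp




lemma err_lim: "(c::real) > 0 \<Longrightarrow> ((\<lambda>A. 3 * (1 + ln (A * c + 1)) / A) \<longlongrightarrow> 0) at_top"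
  by real_asymp

lemma klemma: "k > 0 \<Longrightarrow> A > 0 \<Longrightarrow> real k * ln (real k) = A * ((real k / A) * ln (real k / A)) + real k * ln A"
  by (simp add: ln_div algebra_simps)

lemma g_lim:
  assumes "(f \<longlongrightarrow> (L::real)) F" "L \<noteq> 0"
  shows "((\<lambda>A. f A * ln (f A)) \<longlongrightarrow> L * ln L) F"
  by (intro tendsto_intros assms)

theorem lemma2:
  fixes \<alpha> \<mu> x y :: real and E :: "nat \<Rightarrow> nat \<Rightarrow> real"
  assumes "\<alpha> > 0" and "\<mu> > 0" and "\<alpha> / \<mu> < 1"
    and "\<And>m. ps_stationary \<alpha> \<mu> m (E m)"
    and "x > 0" and "y > 0"
  shows "((\<lambda>A. ln (E (nat \<lfloor>A * y\<rfloor>) (nat \<lfloor>A * x\<rfloor>)) / A)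
           \<longlongrightarrow> - K_rate (\<alpha> / \<mu>) x y) at_top"
proof -
  note a = assms(1) and mu = assms(2) and r = assms(3) and st = assms(4) and x = assms(5) and y = assms(6)
  define \<rho> where "\<rho> = \<alpha> / \<mu>"
  have r0: "0 < \<rho>" "\<rho> < 1" using a mu r by (auto simp: \<rho>_def)
  define nA where "nA A = nat \<lfloor>A * x\<rfloor>" for A
  define mA where "mA A = nat \<lfloor>A * y\<rfloor>" for A
  define e where "e k = ln (fact k) - (real k * ln (real k) - real k)" for k :: nat
  have ebound: "\<bar>e k\<bar> \<le> 1 + ln (real k + 1)" for k
    using lnfact_err[of k] by (simp add: e_def)
  define F where "F A = (real (mA A) / A + 1 / A) * ln (1 - \<rho>) + real (nA A) / A * ln \<rho>
     + ((real (nA A + mA A) / A) * ln (real (nA A + mA A) / A)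
        - (real (nA A) / A) * ln (real (nA A) / A) - (real (mA A) / A) * ln (real (mA A) / A))
     + (e (nA A + mA A) - e (nA A) - e (mA A)) / A" for A
  have ev: "\<forall>\<^sub>F A in at_top. A > 0 \<and> A * x \<ge> 1 \<and> A * y \<ge> 1"
    using eventually_gt_at_top[of 0] eventually_ge_at_top[of "1/x"] eventually_ge_at_top[of "1/y"]
  proof eventually_elim
    case (elim A)
    then show ?case using x y by (simp add: field_simps)
  qed
  have eq: "\<forall>\<^sub>F A in at_top. F A = ln (E (nat \<lfloor>A * y\<rfloor>) (nat \<lfloor>A * x\<rfloor>)) / A"
    using ev
  proof eventually_elim
    case (elim A)
    define n where "n = nA A"
    define m where "m = mA A"
    have A0: "A > 0" using elim by simp
    have n1: "n \<ge> 1" using elim unfolding n_def nA_def by linarith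
    have m1: "m \<ge> 1" using elim unfolding m_def mA_def by linarith
    have E: "E m n = (1 - \<rho>) ^ (m+1) * \<rho> ^ n * real ((n + m) choose n)"
      using stat_formula[OF a mu r st[of m]] by (simp add: \<rho>_def)
    have Cpos: "real ((n + m) choose n) > 0" by simp
    have lnE: "ln (E m n) = real (m+1) * ln (1 - \<rho>) + real n * ln \<rho> + ln (real ((n + m) choose n))"
    proof -
      have p1: "(1 - \<rho>) ^ (m+1) > 0" "\<rho> ^ n > 0" using r0 by auto
      have "ln (E m n) = ln ((1 - \<rho>) ^ (m+1)) + ln (\<rho> ^ n) + ln (real ((n + m) choose n))"
        unfolding E using p1 Cpos by (simp only: ln_mult_pos mult_pos_pos)
      also have "ln ((1 - \<rho>) ^ (m+1)) = real (m+1) * ln (1 - \<rho>)" using r0 ln_realpow[of "1 - \<rho>" "m+1"] by linarith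
      also have "ln (\<rho> ^ n) = real n * ln \<rho>" using r0 by (simp add: ln_realpow)
      finally show ?thesis .
    qed
    have C: "real ((n + m) choose n) = fact (n+m) / (fact n * fact m)"
      using binomial_fact[of n "n+m", where 'a=real] by (simp only: le_add1 add_diff_cancel_left' simp_thms)
    have lnC: "ln (real ((n + m) choose n)) = ln (fact (n+m)) - ln (fact n) - ln (fact m)"
      unfolding C by (simp add: ln_div ln_mult)
    have k1: "real (n+m) * ln (real (n+m)) = A * ((real (n+m) / A) * ln (real (n+m) / A)) + real (n+m) * ln A"
      by (rule klemma) (use n1 A0 in auto)
    have k2: "real n * ln (real n) = A * ((real n / A) * ln (real n / A)) + real n * ln A"
      by (rule klemma) (use n1 A0 in auto)
    have k3: "real m * ln (real m) = A * ((real m / A) * ln (real m / A)) + real m * ln A"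
      by (rule klemma) (use m1 A0 in auto)
    define gN where "gN = (real (n+m) / A) * ln (real (n+m) / A)"
    define gn where "gn = (real n / A) * ln (real n / A)"
    define gm where "gm = (real m / A) * ln (real m / A)"
    have FA: "F A = (real m / A + 1 / A) * ln (1 - \<rho>) + real n / A * ln \<rho> + (gN - gn - gm)
        + (e (n + m) - e n - e m) / A"
      unfolding F_def n_def m_def gN_def gn_def gm_def by simp
    have AF: "A * F A = (real m + 1) * ln (1 - \<rho>) + real n * ln \<rho> + (A * gN - A * gn - A * gm)
        + (e (n + m) - e n - e m)"
      unfolding FA using A0 by (simp add: field_simps)
    have dist: "real (n+m) * ln A = real n * ln A + real m * ln A" "real (n+m) = real n + real m"
      by (simp_all add: algebra_simps)
    have "ln (E m n) = A * F A"
      unfolding AF lnE lnC e_def using k1 k2 k3 dist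
      unfolding gN_def[symmetric] gn_def[symmetric] gm_def[symmetric] by simp
    then show ?case using A0 unfolding n_def m_def nA_def mA_def by simp
  qed
  have ln: "((\<lambda>A. real (nA A) / A) \<longlongrightarrow> x) at_top" unfolding nA_def by (rule floor_lim[OF x])
  have lm: "((\<lambda>A. real (mA A) / A) \<longlongrightarrow> y) at_top" unfolding mA_def by (rule floor_lim[OF y])
  have lN: "((\<lambda>A. real (nA A + mA A) / A) \<longlongrightarrow> x + y) at_top"
    using tendsto_add[OF ln lm] by (simp add: add_divide_distrib)
  have lerr: "((\<lambda>A. (e (nA A + mA A) - e (nA A) - e (mA A)) / A) \<longlongrightarrow> 0) at_top"
  proof (rule tendsto_sandwich[where f = "\<lambda>A. - (3 * (1 + ln (A * (x+y) + 1)) / A)"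
        and h = "\<lambda>A. 3 * (1 + ln (A * (x+y) + 1)) / A"])
    have bnd: "\<forall>\<^sub>F A in at_top. \<bar>(e (nA A + mA A) - e (nA A) - e (mA A)) / A\<bar> \<le> 3 * (1 + ln (A * (x+y) + 1)) / A"
      using ev
    proof eventually_elim
      case (elim A)
      have A0: "A > 0" using elim by simp
      have nle: "real (nA A) \<le> A * x" using elim unfolding nA_def by (simp add: of_nat_nat)
      have mle: "real (mA A) \<le> A * y" using elim unfolding mA_def by (simp add: of_nat_nat)
      have lnb: "ln (real k + 1) \<le> ln (A * (x+y) + 1)" if "real k \<le> A * (x + y)" for k
        using that by simp
      have b1: "real (nA A + mA A) \<le> A * (x+y)" using nle mle by (simp add: algebra_simps)
      have b2: "real (nA A) \<le> A * (x+y)" using nle mult_pos_pos[OF A0 y] by (simp add: distrib_left)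
      have b3: "real (mA A) \<le> A * (x+y)" using mle mult_pos_pos[OF A0 x] by (simp add: distrib_left)
      have "\<bar>e (nA A + mA A)\<bar> \<le> 1 + ln (A * (x+y) + 1)"
        using ebound[of "nA A + mA A"] lnb[OF b1] by linarith
      moreover have "\<bar>e (nA A)\<bar> \<le> 1 + ln (A * (x+y) + 1)"
        using ebound[of "nA A"] lnb[OF b2] by linarith
      moreover have "\<bar>e (mA A)\<bar> \<le> 1 + ln (A * (x+y) + 1)"
        using ebound[of "mA A"] lnb[OF b3] by linarith
      ultimately have "\<bar>e (nA A + mA A) - e (nA A) - e (mA A)\<bar> \<le> 3 * (1 + ln (A * (x+y) + 1))"
        by (smt (verit))
      hence "\<bar>e (nA A + mA A) - e (nA A) - e (mA A)\<bar> / A \<le> 3 * (1 + ln (A * (x + y) + 1)) / A"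
        using A0 by (intro divide_right_mono) auto
      moreover have "\<bar>(e (nA A + mA A) - e (nA A) - e (mA A)) / A\<bar> = \<bar>e (nA A + mA A) - e (nA A) - e (mA A)\<bar> / A"
        by (simp only: abs_divide abs_of_pos[OF A0])
      ultimately show ?case by (simp only:)
    qed
    show "\<forall>\<^sub>F A in at_top. - (3 * (1 + ln (A * (x+y) + 1)) / A) \<le> (e (nA A + mA A) - e (nA A) - e (mA A)) / A"
      using bnd by eventually_elim linarith
    show "\<forall>\<^sub>F A in at_top. (e (nA A + mA A) - e (nA A) - e (mA A)) / A \<le> 3 * (1 + ln (A * (x+y) + 1)) / A"
      using bnd by eventually_elim linarith
    show "((\<lambda>A. 3 * (1 + ln (A * (x+y) + 1)) / A) \<longlongrightarrow> 0) at_top" by (rule err_lim) (use x y in simp)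
    show "((\<lambda>A. - (3 * (1 + ln (A * (x+y) + 1)) / A)) \<longlongrightarrow> 0) at_top"
      using tendsto_minus[OF err_lim[of "x+y"]] x y by simp
  qed
  have inv: "((\<lambda>A. 1 / A) \<longlongrightarrow> (0::real)) at_top" by real_asymp
  have "(F \<longlongrightarrow> (y + 0) * ln (1 - \<rho>) + x * ln \<rho> + ((x+y) * ln (x+y) - x * ln x - y * ln y) + 0) at_top"
    unfolding F_def
    by (intro tendsto_add tendsto_diff tendsto_mult tendsto_const g_lim ln lm lN lerr inv) (use x y in auto)
  moreover have "(y + 0) * ln (1 - \<rho>) + x * ln \<rho> + ((x+y) * ln (x+y) - x * ln x - y * ln y) + 0
      = - K_rate (\<alpha> / \<mu>) x y"
    unfolding K_rate_def \<rho>_def[symmetric] using x r0 by (simp add: ln_div algebra_simps)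
  ultimately have "(F \<longlongrightarrow> - K_rate (\<alpha> / \<mu>) x y) at_top" by simp
  then show ?thesis by (rule tendsto_cong[THEN iffD1, rotated]) (rule eq)
qed

end
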